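(* Let $n\ge m\ge 1$ be integers and $d\in\{l,r\}$. The algorithm $\mathrm{move}(n,m,d)$ described in the context performs only legal moves, transforms the initial configuration $b^nOw^m$ into the final configuration $w^mOb^n$, and uses exactly $nm+n+m$ moves; consequently it is optimal, i.e. no sequence of legal moves transforms the initial configuration into the final one with fewer moves.
   Context: The game: positions $1,\dots,n+m+1$ in a row, each holding a black checker ($b$), a white checker ($w$) or nothing, with exactly one empty position (the vacancy $O$). Initial configuration $b^nOw^m$, final configuration $w^mOb^n$. A legal move is a slide (a checker adjacent to the vacancy moves into it) or a jump (a checker at distance two from the vacancy jumps over the checker between them into it). Elementary operations: slide($l$): the checker immediately to the right of the vacancy slides left into it; slide($r$): the checker immediately to the left of the vacancy slides right into it; jump($l$): the checker two positions to the right of the vacancy jumps left into it; jump($r$): the checker two positions to the left of the vacancy jumps right into it; change($dir$) replaces $dir$ by the other element of $\{l,r\}$. The algorithm $\mathrm{move}(n,m,d)$: set $dir\gets d$. Stage 1: for $i=1,\dots,m$: perform jump($dir$) $i-1$ times, then slide($dir$), then change($dir$). Stage 2: perform jump($dir$) $m$ times. Stage 3: for $i=1,\dots,n-m$: perform slide($r$), then change($dir$), then jump($dir$) $m$ times. Stage 4: for $i=m,m-1,\dots,1$: perform change($dir$), then slide($dir$), then jump($dir$) $i-1$ times. *)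

theory Defs
  imports Main
begin

datatype cell = Bl | Wh | Vac

type_synonym conf = "cell list"  (* position i+1 of the paper = list index i *)

datatype dir = L | R

fun change :: "dir \<Rightarrow> dir" where
  "change L = R" | "change R = L"

datatype elop = Slide dir | Jump dir

definition init_conf :: "nat \<Rightarrow> nat \<Rightarrow> conf" where
  "init_conf n m = replicate n Bl @ [Vac] @ replicate m Wh"

definition final_conf :: "nat \<Rightarrow> nat \<Rightarrow> conf" where
  "final_conf n m = replicate m Wh @ [Vac] @ replicate n Bl"

definition legal_move :: "conf \<Rightarrow> conf \<Rightarrow> bool" where
  "legal_move c c' \<longleftrightarrow> (\<exists>p q. p < length c \<and> q < length c \<and> c ! p = Vac \<and> c ! q \<noteq> Vac \<and>
     (q = p + 1 \<or> p = q + 1 \<or>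
      ((q = p + 2 \<or> p = q + 2) \<and> c ! (min p q + 1) \<noteq> Vac)) \<and>
     c' = c[p := c ! q, q := Vac])"

fun src :: "elop \<Rightarrow> nat \<Rightarrow> int" where
  "src (Slide L) v = int v + 1"
| "src (Slide R) v = int v - 1"
| "src (Jump L) v = int v + 2"
| "src (Jump R) v = int v - 2"

definition vacancy :: "conf \<Rightarrow> nat" where
  "vacancy c = (LEAST i. i < length c \<and> c ! i = Vac)"

definition apply_op :: "elop \<Rightarrow> conf \<Rightarrow> conf option" where
  "apply_op op c = (let v = vacancy c; s = src op v in
     if 0 \<le> s \<and> s < int (length c)
     then Some (c[v := c ! nat s, nat s := Vac]) else None)"

fun run :: "elop list \<Rightarrow> conf \<Rightarrow> conf list option" where
  "run [] c = Some [c]"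
| "run (op # os) c = (case apply_op op c of None \<Rightarrow> None
                      | Some c' \<Rightarrow> map_option (Cons c) (run os c'))"

definition dir_after :: "dir \<Rightarrow> nat \<Rightarrow> dir" where
  "dir_after d k = (change ^^ k) d"

definition stage1 :: "nat \<Rightarrow> dir \<Rightarrow> elop list" where
  "stage1 m d = concat (map (\<lambda>i. replicate (i - 1) (Jump (dir_after d (i - 1)))
                                 @ [Slide (dir_after d (i - 1))]) [1..<m+1])"

definition stage2 :: "nat \<Rightarrow> dir \<Rightarrow> elop list" where
  "stage2 m d = replicate m (Jump (dir_after d m))"

definition stage3 :: "nat \<Rightarrow> nat \<Rightarrow> dir \<Rightarrow> elop list" where
  "stage3 n m d = concat (map (\<lambda>i. [Slide R] @ replicate m (Jump (dir_after d (m + i))))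
                                [1..<n-m+1])"

definition stage4 :: "nat \<Rightarrow> nat \<Rightarrow> dir \<Rightarrow> elop list" where
  "stage4 n m d = concat (map (\<lambda>i. [Slide (dir_after d (n + (m - i) + 1))]
                                   @ replicate (i - 1) (Jump (dir_after d (n + (m - i) + 1))))
                                (rev [1..<m+1]))"

definition move :: "nat \<Rightarrow> nat \<Rightarrow> dir \<Rightarrow> elop list" where
  "move n m d = stage1 m d @ stage2 m d @ stage3 n m d @ stage4 n m d"

end

theory Submission
  imports Defs
begin


definition steps :: "elop list \<Rightarrow> conf \<Rightarrow> conf \<Rightarrow> bool" where
  "steps ops c c' \<longleftrightarrow> (\<exists>tr. run ops c = Some tr
            \<and> (\<forall>i. i + 1 < length tr \<longrightarrow> legal_move (tr ! i) (tr ! (i + 1)))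
            \<and> last tr = c')"

lemma run_hd: "run ops c = Some tr \<Longrightarrow> tr \<noteq> [] \<and> hd tr = c"
proof (induction ops arbitrary: c tr)
  case Nil then show ?case by auto
next
  case (Cons op ops)
  then show ?case by (auto split: option.splits)
qed

lemma steps_Nil: "x = y \<Longrightarrow> steps [] x y"
  by (simp add: steps_def)

lemma steps_Cons:
  assumes "apply_op op c = Some c1" "legal_move c c1" "steps ops c1 c2"
  shows "steps (op # ops) c c2"
proof -
  from assms(3) obtain tr where tr: "run ops c1 = Some tr"
    "\<forall>i. i + 1 < length tr \<longrightarrow> legal_move (tr ! i) (tr ! (i + 1))" "last tr = c2"
    by (auto simp: steps_def)
  from run_hd[OF tr(1)] have ne: "tr \<noteq> []" "hd tr = c1" by auto
  have "run (op # ops) c = Some (c # tr)" using assms(1) tr(1) by simp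
  moreover have "\<forall>i. i + 1 < length (c # tr) \<longrightarrow> legal_move ((c # tr) ! i) ((c # tr) ! (i + 1))"
  proof (intro allI impI)
    fix i assume i: "i + 1 < length (c # tr)"
    show "legal_move ((c # tr) ! i) ((c # tr) ! (i + 1))"
    proof (cases i)
      case 0 then show ?thesis using ne assms(2) by (simp add: hd_conv_nth)
    next
      case (Suc j) then show ?thesis using tr(2) i by simp
    qed
  qed
  moreover have "last (c # tr) = c2" using ne tr(3) by simp
  ultimately show ?thesis by (auto simp: steps_def)
qed

lemma steps_ConsD:
  assumes "steps (op # ops) c c2"
  shows "\<exists>c1. apply_op op c = Some c1 \<and> legal_move c c1 \<and> steps ops c1 c2"
proof -
  from assms obtain tr where tr: "run (op # ops) c = Some tr"
    "\<forall>i. i + 1 < length tr \<longrightarrow> legal_move (tr ! i) (tr ! (i + 1))" "last tr = c2"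
    by (auto simp: steps_def)
  then obtain c1 tr' where c1: "apply_op op c = Some c1" "run ops c1 = Some tr'" "tr = c # tr'"
    by (auto split: option.splits)
  from run_hd[OF c1(2)] have ne: "tr' \<noteq> []" "hd tr' = c1" by auto
  have "legal_move c c1" using tr(2)[rule_format, of 0] c1(3) ne by (simp add: hd_conv_nth)
  moreover have "steps ops c1 c2"
    unfolding steps_def
  proof (intro exI conjI allI impI)
    show "run ops c1 = Some tr'" by fact
    fix i assume "i + 1 < length tr'"
    then show "legal_move (tr' ! i) (tr' ! (i + 1))" using tr(2)[rule_format, of "Suc i"] c1(3) by simp
  next
    show "last tr' = c2" using tr(3) c1(3) ne by simp
  qed
  ultimately show ?thesis using c1 by blast
qed

lemma steps_append: "steps a c c1 \<Longrightarrow> steps b c1 c2 \<Longrightarrow> steps (a @ b) c c2"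
proof (induction a arbitrary: c)
  case Nil then show ?case by (simp add: steps_def)
next
  case (Cons op ops)
  from steps_ConsD[OF Cons.prems(1)] obtain c' where
    "apply_op op c = Some c'" "legal_move c c'" "steps ops c' c1" by blast
  then show ?case using Cons.IH Cons.prems(2) by (auto intro: steps_Cons)
qed

lemma nat_int_helpers[simp]: "nat (int k + 1) = Suc k" "nat (int k + 2) = Suc (Suc k)"
  by auto

lemma vac_idx: "Vac \<notin> set xs \<Longrightarrow> vacancy (xs @ Vac # ys) = length xs"
  unfolding vacancy_def
proof (rule Least_equality)
  show "length xs < length (xs @ Vac # ys) \<and> (xs @ Vac # ys) ! length xs = Vac" by simp
next
  fix y assume "Vac \<notin> set xs" "y < length (xs @ Vac # ys) \<and> (xs @ Vac # ys) ! y = Vac"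
  then show "length xs \<le> y"
    by (metis linorder_not_le nth_append nth_mem)
qed

lemma st_slideL:
  assumes "Vac \<notin> set xs" "a \<noteq> Vac" "steps ops (xs @ a # Vac # ys) c"
  shows "steps (Slide L # ops) (xs @ Vac # a # ys) c"
proof (rule steps_Cons[OF _ _ assms(3)])
  show "apply_op (Slide L) (xs @ Vac # a # ys) = Some (xs @ a # Vac # ys)"
    using assms by (simp add: Let_def apply_op_def vac_idx nth_append list_update_append)
  show "legal_move (xs @ Vac # a # ys) (xs @ a # Vac # ys)"
    unfolding legal_move_def using assms
    by (intro exI[of _ "length xs"] exI[of _ "Suc (length xs)"]) (simp add: nth_append list_update_append)
qed

lemma st_slideR:
  assumes "Vac \<notin> set xs" "a \<noteq> Vac" "steps ops (xs @ Vac # a # ys) c"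
  shows "steps (Slide R # ops) (xs @ a # Vac # ys) c"
proof (rule steps_Cons[OF _ _ assms(3)])
  have v: "vacancy (xs @ a # Vac # ys) = Suc (length xs)"
    using vac_idx[of "xs @ [a]" ys] assms by simp
  show "apply_op (Slide R) (xs @ a # Vac # ys) = Some (xs @ Vac # a # ys)"
    using assms by (simp add: Let_def apply_op_def v nth_append list_update_append)
  show "legal_move (xs @ a # Vac # ys) (xs @ Vac # a # ys)"
    unfolding legal_move_def using assms
    by (intro exI[of _ "Suc (length xs)"] exI[of _ "length xs"]) (simp add: nth_append list_update_append)
qed

lemma st_jumpL:
  assumes "Vac \<notin> set xs" "a \<noteq> Vac" "b \<noteq> Vac" "steps ops (xs @ b # a # Vac # ys) c"
  shows "steps (Jump L # ops) (xs @ Vac # a # b # ys) c"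
proof (rule steps_Cons[OF _ _ assms(4)])
  show "apply_op (Jump L) (xs @ Vac # a # b # ys) = Some (xs @ b # a # Vac # ys)"
    using assms by (simp add: Let_def apply_op_def vac_idx nth_append list_update_append)
  show "legal_move (xs @ Vac # a # b # ys) (xs @ b # a # Vac # ys)"
    unfolding legal_move_def using assms
    by (intro exI[of _ "length xs"] exI[of _ "Suc (Suc (length xs))"]) (simp add: nth_append list_update_append)
qed

lemma st_jumpR:
  assumes "Vac \<notin> set xs" "a \<noteq> Vac" "b \<noteq> Vac" "steps ops (xs @ Vac # b # a # ys) c"
  shows "steps (Jump R # ops) (xs @ a # b # Vac # ys) c"
proof (rule steps_Cons[OF _ _ assms(4)])
  have v: "vacancy (xs @ a # b # Vac # ys) = Suc (Suc (length xs))"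
    using vac_idx[of "xs @ [a, b]" ys] assms by simp
  show "apply_op (Jump R) (xs @ a # b # Vac # ys) = Some (xs @ Vac # b # a # ys)"
    using assms by (simp add: Let_def apply_op_def v nth_append list_update_append)
  show "legal_move (xs @ a # b # Vac # ys) (xs @ Vac # b # a # ys)"
    unfolding legal_move_def using assms
    by (intro exI[of _ "Suc (Suc (length xs))"] exI[of _ "length xs"]) (simp add: nth_append list_update_append)
qed


definition alt :: "cell \<Rightarrow> cell \<Rightarrow> nat \<Rightarrow> cell list" where
  "alt a b k = concat (replicate k [a, b])"

lemma alt_0[simp]: "alt a b 0 = []" by (simp add: alt_def)
lemma alt_Suc: "alt a b (Suc k) = a # b # alt a b k" by (simp add: alt_def)
lemma alt_snoc: "alt a b (Suc k) = alt a b k @ [a, b]"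
  by (induction k) (simp_all add: alt_def)
lemma alt_swap: "a # alt b a k = alt a b k @ [a]"
  by (induction k) (simp_all add: alt_Suc)
lemma alt_set: "set (alt a b k) \<subseteq> {a, b}"
  by (auto simp: alt_def)
lemma vac_alt[simp]: "a \<noteq> Vac \<Longrightarrow> b \<noteq> Vac \<Longrightarrow> Vac \<notin> set (alt a b k)"
  using alt_set by blast

lemma st_jumpsL:
  assumes "Vac \<notin> set xs" "a \<noteq> Vac" "b \<noteq> Vac" "steps ops (xs @ alt b a k @ Vac # ys) c"
  shows "steps (replicate k (Jump L) @ ops) (xs @ Vac # alt a b k @ ys) c"
  using assms
proof (induction k arbitrary: xs)
  case 0 then show ?case by simp
next
  case (Suc k)
  have "steps (replicate k (Jump L) @ ops) ((xs @ [b, a]) @ Vac # alt a b k @ ys) c"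
    using Suc.prems by (intro Suc.IH) (auto simp: alt_Suc)
  then show ?case using Suc.prems
    by (auto simp: alt_Suc intro!: st_jumpL)
qed

lemma st_jumpsR:
  assumes "Vac \<notin> set xs" "a \<noteq> Vac" "b \<noteq> Vac" "steps ops (xs @ Vac # alt b a k @ ys) c"
  shows "steps (replicate k (Jump R) @ ops) (xs @ alt a b k @ Vac # ys) c"
  using assms
proof (induction k arbitrary: ys)
  case 0 then show ?case by simp
next
  case (Suc k)
  have eq: "alt b a (Suc k) @ ys = alt b a k @ (b # a # ys)"
    by (simp add: alt_snoc)
  have "steps ops (xs @ Vac # alt b a k @ (b # a # ys)) c"
    using Suc.prems(4) eq by simp
  then have "steps (replicate k (Jump R) @ ops) (xs @ alt a b k @ Vac # b # a # ys) c"
    using Suc.prems by (intro Suc.IH) auto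
  then have "steps (Jump R # replicate k (Jump R) @ ops) ((xs @ alt a b k) @ a # b # Vac # ys) c"
    using Suc.prems by (intro st_jumpR) auto
  moreover have "replicate (Suc k) (Jump R) @ ops = Jump R # replicate k (Jump R) @ ops" by simp
  ultimately show ?case by (simp add: alt_snoc)
qed

lemma dir_after_Suc: "dir_after d (Suc k) = change (dir_after d k)"
  by (simp add: dir_after_def)

lemma change_R: "change e = L \<longleftrightarrow> e = R" and change_L: "change e = R \<longleftrightarrow> e = L"
  by (cases e; simp)+

lemma rep_snoc: "replicate (Suc j) x = replicate j x @ [x]"
  by (simp add: replicate_append_same)


definition S1 :: "nat \<Rightarrow> nat \<Rightarrow> dir \<Rightarrow> nat \<Rightarrow> conf" where
  "S1 n m d k = (if dir_after d k = R
     then replicate (n-k) Bl @ alt Bl Wh k @ Vac # replicate (m-k) Wh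
     else replicate (n-k) Bl @ Vac # alt Bl Wh k @ replicate (m-k) Wh)"

lemma rep_alt: "replicate j a @ alt a b k @ [a] = a # replicate j a @ alt b a k"
proof -
  have "a # replicate j a @ alt b a k = replicate j a @ (a # alt b a k)"
    by (simp add: replicate_append_same[symmetric])
  also have "\<dots> = replicate j a @ alt a b k @ [a]" by (simp add: alt_swap)
  finally show ?thesis by simp
qed

lemma rep_alt2: "replicate j a @ alt a b (Suc k) = a # replicate j a @ alt b a k @ [b]"
proof -
  have "replicate j a @ alt a b (Suc k) = (replicate j a @ alt a b k @ [a]) @ [b]"
    by (simp add: alt_snoc)
  also have "\<dots> = a # replicate j a @ alt b a k @ [b]" by (simp add: rep_alt)
  finally show ?thesis .
qed

lemma stage1_step:
  assumes "Suc k \<le> m" "m \<le> n"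
  shows "steps (replicate k (Jump (dir_after d k)) @ [Slide (dir_after d k)]) (S1 n m d k) (S1 n m d (Suc k))"
proof -
  obtain j where j: "n - k = Suc j" "n - Suc k = j" using assms by (metis Suc_diff_Suc le_trans less_eq_Suc_le)
  obtain i where i: "m - k = Suc i" "m - Suc k = i" using assms by (metis Suc_diff_Suc less_eq_Suc_le)
  show ?thesis
  proof (cases "dir_after d k")
    case R
    then have d2: "dir_after d (Suc k) = L" by (simp add: dir_after_Suc)
    have "steps (replicate k (Jump R) @ [Slide R]) (replicate (n-k) Bl @ alt Bl Wh k @ Vac # replicate (m-k) Wh) (S1 n m d (Suc k))"
      apply (rule st_jumpsR, simp, simp, simp)
      apply (simp only: j(1) rep_snoc append_assoc append_Cons append_Nil)
      apply (rule st_slideR, simp, simp)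
      apply (rule steps_Nil)
      using d2 i j by (simp add: S1_def alt_swap alt_snoc)
    then show ?thesis using R by (simp add: S1_def)
  next
    case L
    then have d2: "dir_after d (Suc k) = R" by (simp add: dir_after_Suc)
    have "steps (replicate k (Jump L) @ [Slide L]) (replicate (n-k) Bl @ Vac # alt Bl Wh k @ replicate (m-k) Wh) (S1 n m d (Suc k))"
      apply (rule st_jumpsL, simp, simp, simp)
      apply (simp only: i(1) replicate_Suc)
      apply (rule st_slideL[where xs="replicate (n-k) Bl @ alt Wh Bl k", simplified], simp)
      apply (rule steps_Nil)
      using d2 i j by (simp add: S1_def rep_alt2)
    then show ?thesis using L by (simp add: S1_def)
  qed
qed

lemma stage1_gen:
  assumes "k \<le> m" "m \<le> n"
  shows "steps (concat (map (\<lambda>i. replicate (i - 1) (Jump (dir_after d (i - 1)))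
                                 @ [Slide (dir_after d (i - 1))]) [1..<k+1])) (S1 n m d 0) (S1 n m d k)"
  using assms
proof (induction k)
  case 0 then show ?case by (simp add: steps_Nil)
next
  case (Suc k)
  have "[1..<Suc k + 1] = [1..<k+1] @ [Suc k]" by simp
  then show ?case
    using steps_append[OF Suc.IH stage1_step[of k m n d]] Suc.prems by simp
qed

lemma S1_0: "S1 n m d 0 = init_conf n m"
  by (simp add: S1_def init_conf_def)

definition T3 :: "nat \<Rightarrow> nat \<Rightarrow> dir \<Rightarrow> nat \<Rightarrow> conf" where
  "T3 n m d i = (if dir_after d (m+i) = R
     then replicate (n-m-i) Bl @ Vac # alt Wh Bl m @ replicate i Bl
     else replicate (n-m-i) Bl @ alt Wh Bl m @ Vac # replicate i Bl)"

lemma stage2_lem: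
  assumes "m \<le> n"
  shows "steps (stage2 m d) (S1 n m d m) (T3 n m d 0)"
proof (cases "dir_after d m")
  case R
  show ?thesis unfolding stage2_def using R
    apply (simp add: S1_def T3_def)
    using st_jumpsR[where xs="replicate (n-m) Bl" and a=Bl and b=Wh and ops="[]" and ys="[]" and k=m and c="replicate (n-m) Bl @ Vac # alt Wh Bl m"]
    by (simp add: steps_Nil)
next
  case L
  show ?thesis unfolding stage2_def using L
    apply (simp add: S1_def T3_def)
    using st_jumpsL[where xs="replicate (n-m) Bl" and a=Bl and b=Wh and ops="[]" and ys="[]" and k=m and c="replicate (n-m) Bl @ alt Wh Bl m @ [Vac]"]
    by (simp add: steps_Nil)
qed


lemma alt_swap_app: "a # alt b a k @ ys = alt a b k @ a # ys"
  by (simp add: alt_swap[symmetric])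

lemma stage3_step:
  assumes "Suc k \<le> n - m" "1 \<le> m"
  shows "steps ([Slide R] @ replicate m (Jump (dir_after d (m + Suc k)))) (T3 n m d k) (T3 n m d (Suc k))"
proof -
  obtain j where j: "n - m - k = Suc j" "n - m - Suc k = j" using assms by (metis Suc_diff_Suc less_eq_Suc_le)
  obtain m' where m': "m = Suc m'" using assms by (cases m) auto
  show ?thesis
  proof (cases "dir_after d (m + k)")
    case R
    then have d2: "dir_after d (m + Suc k) = L" by (simp add: dir_after_Suc)
    have "steps ([Slide R] @ replicate m (Jump L)) (replicate (n-m-k) Bl @ Vac # alt Wh Bl m @ replicate k Bl) (T3 n m d (Suc k))"
      apply (simp only: j(1) rep_snoc append_assoc append_Cons append_Nil)
      apply (rule st_slideR, simp, simp)
      apply (simp only: alt_swap_app)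
      apply (rule st_jumpsL[where ops="[]", simplified], (simp; fail)+)
      apply (rule steps_Nil)
      using d2 j by (simp add: T3_def)
    then show ?thesis using R d2 by (simp add: T3_def)
  next
    case L
    then have d2: "dir_after d (m + Suc k) = R" by (simp add: dir_after_Suc)
    have e1: "replicate (n-m-k) Bl @ alt Wh Bl m @ Vac # replicate k Bl
       = (replicate (n-m-k) Bl @ alt Wh Bl m' @ [Wh]) @ Bl # Vac # replicate k Bl"
      by (simp add: m' alt_snoc)
    have e2: "replicate (n-m-k) Bl @ alt Wh Bl m' @ [Wh] = replicate j Bl @ alt Bl Wh m"
    proof -
      have "replicate (n-m-k) Bl @ alt Wh Bl m' @ [Wh] = Bl # replicate j Bl @ alt Wh Bl m' @ [Wh]"
        by (simp only: j(1) replicate_Suc append_Cons)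
      also have "\<dots> = replicate j Bl @ alt Bl Wh (Suc m')" by (simp add: rep_alt2)
      finally show ?thesis by (simp add: m')
    qed
    have "steps ([Slide R] @ replicate m (Jump R)) (replicate (n-m-k) Bl @ alt Wh Bl m @ Vac # replicate k Bl) (T3 n m d (Suc k))"
      apply (simp only: e1 append_Cons[of "Slide R"] append_Nil)
      apply (rule st_slideR[where ops="replicate m (Jump R)", simplified], (simp; fail)+)
      apply (simp only: e2 append_assoc)
      apply (rule st_jumpsR[where ops="[]", simplified], (simp; fail)+)
      apply (rule steps_Nil)
      using d2 j by (simp add: T3_def)
    then show ?thesis using L d2 by (simp add: T3_def)
  qed
qed

lemma stage3_gen:
  assumes "k \<le> n - m" "1 \<le> m"
  shows "steps (concat (map (\<lambda>i. [Slide R] @ replicate m (Jump (dir_after d (m + i)))) [1..<k+1])) (T3 n m d 0) (T3 n m d k)"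
  using assms
proof (induction k)
  case 0 then show ?case by (simp add: steps_Nil)
next
  case (Suc k)
  have "[1..<Suc k + 1] = [1..<k+1] @ [Suc k]" by simp
  then show ?case
    using steps_append[OF Suc.IH stage3_step[of k n m d]] Suc.prems by simp
qed

definition V4 :: "nat \<Rightarrow> nat \<Rightarrow> dir \<Rightarrow> nat \<Rightarrow> conf" where
  "V4 n m d i = (if dir_after d (n+m-i) = R
     then replicate (m-i) Wh @ Vac # alt Wh Bl i @ replicate (n-i) Bl
     else replicate (m-i) Wh @ alt Wh Bl i @ Vac # replicate (n-i) Bl)"

lemma stage4_step:
  assumes "Suc k \<le> m" "m \<le> n"
  shows "steps ([Slide (dir_after d (n + (m - Suc k) + 1))] @ replicate (Suc k - 1) (Jump (dir_after d (n + (m - Suc k) + 1))))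
           (V4 n m d (Suc k)) (V4 n m d k)"
proof -
  obtain j where j: "n - k = Suc j" "n - Suc k = j" using assms by (metis Suc_diff_Suc le_trans less_eq_Suc_le)
  obtain i where i: "m - k = Suc i" "m - Suc k = i" using assms by (metis Suc_diff_Suc less_eq_Suc_le)
  have ix: "n + (m - Suc k) + 1 = Suc (n + m - Suc k)" "n + m - k = Suc (n + m - Suc k)" "n + (m - Suc k) = n + m - Suc k" using assms by auto
  show ?thesis
  proof (cases "dir_after d (n + m - Suc k)")
    case R
    then have d2: "dir_after d (n + m - k) = L" "dir_after d (n + (m - Suc k) + 1) = L"
      by (simp_all add: ix dir_after_Suc)
    have "steps ([Slide L] @ replicate k (Jump L)) (replicate i Wh @ Vac # alt Wh Bl (Suc k) @ replicate j Bl) (V4 n m d k)"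
      apply (simp only: alt_Suc append_Cons append_Nil)
      apply (rule st_slideL[where ops="replicate k (Jump L)", simplified], (simp; fail)+)
      apply (simp only: alt_swap_app)
      apply (rule st_jumpsL[where ops="[]" and xs="replicate i Wh @ [Wh]", simplified], (simp; fail)+)
      apply (rule steps_Nil)
      using d2 i j by (simp add: V4_def replicate_append_same)
    then show ?thesis using R d2 i j by (simp add: V4_def)
  next
    case L
    then have d2: "dir_after d (n + m - k) = R" "dir_after d (n + (m - Suc k) + 1) = R"
      by (simp_all add: ix dir_after_Suc)
    have e1: "replicate i Wh @ alt Wh Bl (Suc k) @ Vac # replicate j Bl
       = (replicate i Wh @ alt Wh Bl k @ [Wh]) @ Bl # Vac # replicate j Bl"
      by (simp add: alt_snoc)
    have e2: "replicate i Wh @ alt Wh Bl k @ [Wh] = (replicate i Wh @ [Wh]) @ alt Bl Wh k"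
      by (simp add: alt_swap[symmetric])
    have "steps ([Slide R] @ replicate k (Jump R)) (replicate i Wh @ alt Wh Bl (Suc k) @ Vac # replicate j Bl) (V4 n m d k)"
      apply (simp only: e1 append_Cons[of "Slide R"] append_Nil)
      apply (rule st_slideR[where ops="replicate k (Jump R)", simplified], (simp; fail)+)
      apply (simp only: e2 append_assoc[of "replicate i Wh @ [Wh]"])
      apply (rule st_jumpsR[where ops="[]", simplified], (simp; fail)+)
      apply (rule steps_Nil)
      using d2 i j by (simp add: V4_def replicate_append_same)
    then show ?thesis using L d2 i j by (simp add: V4_def)
  qed
qed

lemma stage4_gen:
  assumes "k \<le> m" "m \<le> n"
  shows "steps (concat (map (\<lambda>i. [Slide (dir_after d (n + (m - i) + 1))]
                                   @ replicate (i - 1) (Jump (dir_after d (n + (m - i) + 1))))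
                                (rev [1..<k+1]))) (V4 n m d k) (V4 n m d 0)"
  using assms
proof (induction k)
  case 0 then show ?case by (simp add: steps_Nil)
next
  case (Suc k)
  have "rev [1..<Suc k + 1] = Suc k # rev [1..<k+1]" by simp
  then show ?case
    using steps_append[OF stage4_step[of k m n d] Suc.IH] Suc.prems by simp
qed

lemma T3_V4: "m \<le> n \<Longrightarrow> T3 n m d (n - m) = V4 n m d m"
  by (simp add: T3_def V4_def)

lemma V4_0: "V4 n m d 0 = final_conf n m"
  by (simp add: V4_def final_conf_def)

lemma move_steps:
  assumes "1 \<le> m" "m \<le> n"
  shows "steps (move n m d) (init_conf n m) (final_conf n m)"
proof -
  have "steps (stage1 m d) (init_conf n m) (S1 n m d m)"
    using stage1_gen[of m m n d] assms by (simp add: stage1_def S1_0)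
  moreover have "steps (stage2 m d) (S1 n m d m) (T3 n m d 0)" using stage2_lem assms by simp
  moreover have "steps (stage3 n m d) (T3 n m d 0) (V4 n m d m)"
    using stage3_gen[of "n - m" n m d] assms by (simp add: stage3_def T3_V4)
  moreover have "steps (stage4 n m d) (V4 n m d m) (final_conf n m)"
    using stage4_gen[of m m n d] assms by (simp add: stage4_def V4_0)
  ultimately show ?thesis unfolding move_def by (blast intro: steps_append)
qed


lemma len_tri: "(\<And>i. 1 \<le> i \<Longrightarrow> length (f i) = i) \<Longrightarrow> 2 * length (concat (map f [1..<k+1])) = k * (k + 1)"
proof (induction k)
  case 0 then show ?case by simp
next
  case (Suc k)
  have "[1..<Suc k + 1] = [1..<k+1] @ [Suc k]" by simp
  then show ?case using Suc by simp
qed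

lemma len_const: "(\<And>i. length (f i) = c) \<Longrightarrow> length (concat (map f [1..<k+1])) = k * c"
  by (induction k) simp_all

lemma len_rev: "length (concat (map f (rev xs))) = length (concat (map f xs))"
  by (simp add: length_concat rev_map[symmetric] sum_list_rev)

lemma move_length:
  assumes "1 \<le> m" "m \<le> n"
  shows "length (move n m d) = n * m + n + m"
proof -
  have s1: "2 * length (stage1 m d) = m * (m + 1)"
    unfolding stage1_def by (rule len_tri) auto
  have s4: "2 * length (stage4 n m d) = m * (m + 1)"
    unfolding stage4_def len_rev by (rule len_tri) auto
  have s3: "length (stage3 n m d) = (n - m) * (m + 1)"
    unfolding stage3_def by (rule len_const) simp
  have s2: "length (stage2 m d) = m" by (simp add: stage2_def)
  have e: "(n - m) * (m + 1) + m * (m + 1) = n * (m + 1)"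
    using assms by (metis add_mult_distrib le_add_diff_inverse2)
  show ?thesis using s1 s2 s3 s4 e by (simp add: move_def algebra_simps)
qed


definition cntB :: "cell list \<Rightarrow> nat" where "cntB xs = length (filter (\<lambda>x. x = Bl) xs)"
definition cntW :: "cell list \<Rightarrow> nat" where "cntW xs = length (filter (\<lambda>x. x = Wh) xs)"

lemma cnt_simps[simp]:
  "cntB [] = 0" "cntW [] = 0"
  "cntB (x # xs) = (if x = Bl then Suc (cntB xs) else cntB xs)"
  "cntW (x # xs) = (if x = Wh then Suc (cntW xs) else cntW xs)"
  "cntB (xs @ ys) = cntB xs + cntB ys" "cntW (xs @ ys) = cntW xs + cntW ys"
  by (simp_all add: cntB_def cntW_def)

fun invc :: "cell list \<Rightarrow> nat" where
  "invc [] = 0"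
| "invc (x # xs) = (if x = Bl then cntW xs else 0) + invc xs"

lemma invc_app: "invc (u @ v) = invc u + invc v + cntB u * cntW v"
  by (induction u) (auto simp: algebra_simps)

fun smax :: "cell list \<Rightarrow> nat \<Rightarrow> nat \<Rightarrow> nat \<Rightarrow> nat" where
  "smax [] B0 W1 k = 0"
| "smax (z # zs) B0 W1 k = max (if z = Bl \<and> 0 < cntW zs + W1 then B0 + cntW zs + W1 + (if odd k then 1 else 0) else 0)
      (smax zs (if z = Bl then Suc B0 else B0) W1 (Suc k))"

lemma smax_app: "smax (u @ v) B0 W1 k = max (smax u B0 (cntW v + W1) k) (smax v (B0 + cntB u) W1 (k + length u))"
  by (induction u arbitrary: B0 k) (auto simp: max.assoc add.assoc)

lemma smax_k2: "smax zs B0 W1 (Suc (Suc k)) = smax zs B0 W1 k"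
  by (induction zs arbitrary: B0 k) auto

lemma smax_k1: "smax zs B0 W1 (Suc k) \<le> smax zs B0 W1 k + 1 \<and> smax zs B0 W1 k \<le> smax zs B0 W1 (Suc k) + 1"
proof (induction zs arbitrary: B0 k)
  case Nil then show ?case by simp
next
  case (Cons z zs)
  from Cons[of "if z = Bl then Suc B0 else B0" "Suc k"] show ?case
    by (auto simp: max_def)
qed

lemma smax_noBl: "Bl \<notin> set zs \<Longrightarrow> smax zs B0 W1 k = 0"
  by (induction zs arbitrary: B0 k) auto

lemma smax_noWh: "Wh \<notin> set zs \<Longrightarrow> smax zs B0 0 k = 0"
proof (induction zs arbitrary: B0 k)
  case Nil then show ?case by simp
next
  case (Cons z zs)
  have "cntW zs = 0" using Cons.prems by (auto simp: cntW_def filter_empty_conv)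
  then show ?case using Cons by auto
qed

lemma smax_L1: "0 < W1 \<Longrightarrow> Bl \<in> set xs \<Longrightarrow> B0 + cntB xs + W1 \<le> smax xs B0 W1 k + 1"
proof (induction xs arbitrary: W1 rule: rev_induct)
  case Nil then show ?case by simp
next
  case (snoc z ys)
  show ?case
  proof (cases "z = Bl")
    case True
    then show ?thesis using snoc.prems by (simp add: smax_app)
  next
    case False
    then have "Bl \<in> set ys" using snoc.prems by simp
    from snoc.IH[OF _ this, of "cntW [z] + W1"] snoc.prems False show ?thesis
      by (simp add: smax_app)
  qed
qed

lemma smax_L2: "Vac \<notin> set xs \<Longrightarrow> 0 < W1 \<Longrightarrow> Bl \<in> set xs \<Longrightarrow> even (k + length xs) \<Longrightarrow> B0 + cntB xs + W1 \<le> smax xs B0 W1 k"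
proof (cases xs rule: rev_cases)
  case Nil
  assume "Bl \<in> set xs" then show ?thesis using Nil by simp
next
  case (snoc ys z)
  assume a: "Vac \<notin> set xs" "0 < W1" "Bl \<in> set xs" "even (k + length xs)"
  show ?thesis
  proof (cases "z = Bl")
    case True
    then show ?thesis using a snoc by (simp add: smax_app)
  next
    case False
    then have y: "Bl \<in> set ys" "z = Wh" using a snoc by (simp, cases z, auto)
    from smax_L1[OF _ y(1), of "cntW [z] + W1" B0 k] a False snoc y(2) show ?thesis
      by (simp add: smax_app)
  qed
qed

definition Lsplit :: "cell list \<Rightarrow> cell list \<Rightarrow> nat" where
  "Lsplit xs ys = max (if odd (length xs + cntW xs + cntW ys) then 1 else 0)
                      (max (smax xs 0 (cntW ys) (length xs)) (smax ys (cntB xs) 0 0))"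


definition bs :: "nat \<Rightarrow> nat" where "bs P = (if odd P then 1 else 0)"

lemma Lsplit_alt: "Lsplit xs ys = max (bs (length xs + cntW xs + cntW ys))
                      (max (smax xs 0 (cntW ys) (length xs)) (smax ys (cntB xs) 0 0))"
  by (simp add: Lsplit_def bs_def)

lemma bs_Suc: "bs (Suc P) \<le> bs P + 1" "bs P \<le> bs (Suc P) + 1"
  by (simp_all add: bs_def)

lemma max_le_plus1: "(a::nat) \<le> a' + 1 \<Longrightarrow> b \<le> b' + 1 \<Longrightarrow> max a b \<le> max a' b' + 1"
  by (auto simp: max_def)

lemma Lsplit_slide:
  assumes "a \<noteq> Vac"
  shows "Lsplit (xs @ [a]) ys \<le> Lsplit xs (a # ys) + 1 \<and> Lsplit xs (a # ys) \<le> Lsplit (xs @ [a]) ys + 1"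
proof -
  let ?W = "cntW (a # ys)"
  let ?B = "cntB (xs @ [a])"
  let ?P = "length xs + cntW xs + ?W"
  have k1: "smax xs 0 ?W (Suc (length xs)) \<le> smax xs 0 ?W (length xs) + 1"
           "smax xs 0 ?W (length xs) \<le> smax xs 0 ?W (Suc (length xs)) + 1"
           "smax ys ?B 0 (Suc 0) \<le> smax ys ?B 0 0 + 1"
           "smax ys ?B 0 0 \<le> smax ys ?B 0 (Suc 0) + 1"
    using smax_k1 by blast+
  have e1: "length (xs @ [a]) + cntW (xs @ [a]) + cntW ys = Suc ?P" by simp
  have e2: "smax (xs @ [a]) 0 (cntW ys) (length (xs @ [a])) = max (smax xs 0 ?W (Suc (length xs)))
                (if a = Bl \<and> 0 < cntW ys then cntB xs + cntW ys + 1 else 0)"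
    using assms by (simp add: smax_app)
  have e3: "smax (a # ys) (cntB xs) 0 0 = max (if a = Bl \<and> 0 < cntW ys then cntB xs + cntW ys else 0)
                (smax ys ?B 0 (Suc 0))"
    using assms by simp
  have L1: "Lsplit (xs @ [a]) ys = max (bs (Suc ?P)) (max (max (smax xs 0 ?W (Suc (length xs)))
                (if a = Bl \<and> 0 < cntW ys then cntB xs + cntW ys + 1 else 0)) (smax ys ?B 0 0))"
    unfolding Lsplit_alt e1 e2 by simp
  have L2: "Lsplit xs (a # ys) = max (bs ?P) (max (smax xs 0 ?W (length xs))
                (max (if a = Bl \<and> 0 < cntW ys then cntB xs + cntW ys else 0) (smax ys ?B 0 (Suc 0))))"
    unfolding Lsplit_alt e3 by (simp add: add.assoc)
  show ?thesis unfolding L1 L2 max.assoc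
    by (intro conjI max_le_plus1) (use k1 bs_Suc[of ?P] in auto)
qed


lemma key_fact:
  assumes "Vac \<notin> set xs"
  shows "cntB xs + 1 \<le> max (bs (length xs + cntW xs + 1)) (smax xs 0 1 (length xs))"
proof (cases "Bl \<in> set xs")
  case True
  from smax_L2[OF assms _ True, of 1 "length xs" 0] show ?thesis by simp
next
  case False
  then have "\<forall>x\<in>set xs. x = Wh" using assms by (metis cell.exhaust)
  then have "cntW xs = length xs" by (simp add: cntW_def filter_id_conv)
  moreover have "cntB xs = 0" using False by (auto simp: cntB_def filter_empty_conv)
  ultimately show ?thesis by (simp add: bs_def)
qed

lemma Lsplit_jump:
  assumes "a \<noteq> Vac" "b \<noteq> Vac" "Vac \<notin> set xs"
  shows "Lsplit (xs @ [a, b]) ys = Lsplit xs (b # a # ys)"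
proof -
  let ?P = "bs (length xs + cntW xs + cntW [a, b] + cntW ys)"
  let ?X = "smax xs 0 (cntW [a, b] + cntW ys) (length xs)"
  let ?Y = "smax ys (cntB xs + cntB [a, b]) 0 0"
  let ?tA = "if a = Bl \<and> 0 < cntW [b] + cntW ys then cntB xs + cntW [b] + cntW ys else 0"
  let ?tB = "if b = Bl \<and> 0 < cntW ys then cntB xs + cntB [a] + cntW ys + 1 else 0"
  let ?tB' = "if b = Bl \<and> 0 < cntW [a] + cntW ys then cntB xs + cntW [a] + cntW ys else 0"
  let ?tA' = "if a = Bl \<and> 0 < cntW ys then cntB xs + cntB [b] + cntW ys + 1 else 0"
  have e1: "smax (xs @ [a, b]) 0 (cntW ys) (length (xs @ [a, b])) = max ?X (max ?tA ?tB)"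
  proof -
    have "smax (xs @ [a, b]) 0 (cntW ys) (length (xs @ [a, b]))
       = max (smax xs 0 (cntW [a, b] + cntW ys) (Suc (Suc (length xs))))
             (smax [a, b] (cntB xs) (cntW ys) (Suc (Suc (length xs + length xs))))"
      by (simp add: smax_app)
    also have "\<dots> = max ?X (smax [a, b] (cntB xs) (cntW ys) (length xs + length xs))"
      by (simp only: smax_k2)
    also have "smax [a, b] (cntB xs) (cntW ys) (length xs + length xs) = max ?tA ?tB"
      using assms by (cases a; cases b) simp_all
    finally show ?thesis .
  qed
  have e2: "smax (b # a # ys) (cntB xs) 0 0 = max ?tB' (max ?tA' ?Y)"
  proof -
    have "smax (b # a # ys) (cntB xs) 0 0 = max ?tB' (max ?tA' (smax ys (cntB xs + cntB [a, b]) 0 (Suc (Suc 0))))"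
      using assms by (cases a; cases b) simp_all
    then show ?thesis by (simp only: smax_k2)
  qed
  have L1: "Lsplit (xs @ [a, b]) ys = max ?P (max (max ?X (max ?tA ?tB)) ?Y)"
  proof -
    have p: "bs (length (xs @ [a, b]) + cntW (xs @ [a, b]) + cntW ys) = ?P"
    proof -
      have "length (xs @ [a, b]) + cntW (xs @ [a, b]) + cntW ys = Suc (Suc (length xs + cntW xs + cntW [a, b] + cntW ys))"
        by (simp only: cnt_simps(6) length_append) simp
      then show ?thesis by (simp only: bs_def) simp
    qed
    have q: "cntB (xs @ [a, b]) = cntB xs + cntB [a, b]" by (simp only: cnt_simps(5))
    show ?thesis by (simp only: Lsplit_alt p q e1)
  qed
  have L2: "Lsplit xs (b # a # ys) = max ?P (max ?X (max ?tB' (max ?tA' ?Y)))"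
  proof -
    have w: "cntW (b # a # ys) = cntW [a, b] + cntW ys" by simp
    have p: "bs (length xs + cntW xs + (cntW [a, b] + cntW ys)) = ?P" by (simp only: add.assoc)
    show ?thesis by (simp only: Lsplit_alt p w e2)
  qed
  have K: "cntB xs + 1 \<le> max ?P ?X" if "cntW ys = 0" "a = Bl \<and> b = Wh \<or> a = Wh \<and> b = Bl"
  proof -
    have "cntW [a, b] = 1" using that by auto
    then show ?thesis using key_fact[OF assms(3)] that(1) by simp
  qed
  have absorb: "max P (max (max X (max t 0)) Y) = max P (max X (max 0 (max 0 Y)))" if "t \<le> max P X" for P X Y t :: nat
    using that by (auto simp: max_def split: if_split_asm)
  have absorb2: "max P (max (max X (max 0 0)) Y) = max P (max X (max t (max 0 Y)))" if "t \<le> max P X" for P X Y t :: nat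
    using that by (auto simp: max_def split: if_split_asm)
  have G1: "max P (max (max X (max u v)) Y) = max P (max X (max v (max u Y)))" for P X Y u v :: nat
    by (auto simp: max_def)
  have G2: "max P (max (max X (max u v)) Y) = max P (max X (max u (max v Y)))" for P X Y u v :: nat
    by (auto simp: max_def)
  have G: "max ?P (max (max ?X (max ?tA ?tB)) ?Y) = max ?P (max ?X (max ?tB' (max ?tA' ?Y)))"
  proof (cases "a = Bl \<and> b = Wh \<and> cntW ys = 0")
    case True
    then have t: "?tB = 0" "?tB' = 0" "?tA' = 0" "?tA \<le> max ?P ?X" using K[of] by simp_all
    show ?thesis unfolding t(1-3) by (rule absorb[OF t(4)])
  next
    case F1: False
    show ?thesis
    proof (cases "a = Wh \<and> b = Bl \<and> cntW ys = 0")
      case True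
      then have t: "?tB = 0" "?tA = 0" "?tA' = 0" "?tB' \<le> max ?P ?X" using K by simp_all
      show ?thesis unfolding t(1-3) by (rule absorb2[OF t(4)])
    next
      case False
      show ?thesis
      proof (cases "a = Bl \<and> b = Bl")
        case True
        then have e: "?tA = ?tB'" "?tB = ?tA'" by simp_all
        show ?thesis unfolding e by (rule G2)
      next
        case F3: False
        have e: "?tA = ?tA'" "?tB = ?tB'"
          using F1 False F3 assms by (cases a; cases b; simp)+
        show ?thesis unfolding e by (rule G1)
      qed
    qed
  qed
  then show ?thesis unfolding L1 L2 .
qed


definition Phi2 :: "cell list \<Rightarrow> cell list \<Rightarrow> nat" where
  "Phi2 xs ys = invc (xs @ Vac # ys) + Lsplit xs ys"

lemma invc_jump1: "invc (xs @ Vac # a # b # ys) \<le> invc ((xs @ [b, a]) @ Vac # ys) + 1"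
  by (cases a; cases b) (simp_all add: invc_app)

lemma invc_jump2: "invc ((xs @ [a, b]) @ Vac # ys) \<le> invc (xs @ Vac # b # a # ys) + 1"
  by (cases a; cases b) (simp_all add: invc_app)

lemma invc_slide: "invc (xs @ Vac # a # ys) = invc ((xs @ [a]) @ Vac # ys)"
  by (cases a) (simp_all add: invc_app)

lemma move_phi:
  assumes lm: "legal_move c c'" and c: "c = xs @ Vac # ys" and nx: "Vac \<notin> set xs" and ny: "Vac \<notin> set ys"
  shows "\<exists>xs' ys'. c' = xs' @ Vac # ys' \<and> Vac \<notin> set xs' \<and> Vac \<notin> set ys' \<and> Phi2 xs ys \<le> Phi2 xs' ys' + 1"
proof -
  obtain p q where pq: "p < length c" "q < length c" "c ! p = Vac" "c ! q \<noteq> Vac"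
     "q = p + 1 \<or> p = q + 1 \<or> ((q = p + 2 \<or> p = q + 2) \<and> c ! (min p q + 1) \<noteq> Vac)"
     "c' = c[p := c ! q, q := Vac]"
    using lm unfolding legal_move_def by blast
  have p: "p = length xs"
  proof (rule ccontr)
    assume "p \<noteq> length xs"
    then consider "p < length xs" | "length xs < p" by linarith
    then show False
    proof cases
      case 1 then have "xs ! p = Vac" using pq(3) c by (simp add: nth_append)
      then show False using nx 1 by (metis nth_mem)
    next
      case 2
      then have "ys ! (p - length xs - 1) = Vac" using pq(3) c
        by (simp add: nth_append)
      moreover have "p - length xs - 1 < length ys" using pq(1) c 2 by simp
      ultimately show False using ny by (metis nth_mem)
    qed
  qed
  from pq(5) consider "q = p + 1" | "p = q + 1" | "q = p + 2" | "p = q + 2" by blast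
  then show ?thesis
  proof cases
    case 1
    then obtain a ys1 where ys: "ys = a # ys1" using pq(2) c p by (cases ys) auto
    have a: "a \<noteq> Vac" using ny ys by auto
    have c': "c' = (xs @ [a]) @ Vac # ys1" using pq(6) c p 1 ys by (simp add: nth_append list_update_append)
    have ph: "Phi2 xs ys \<le> Phi2 (xs @ [a]) ys1 + 1"
      unfolding Phi2_def ys using invc_slide[of xs a ys1] Lsplit_slide[OF a, of xs ys1] by simp
    show ?thesis using c' ph nx ny a ys by (intro exI[of _ "xs @ [a]"] exI[of _ ys1] conjI) simp_all
  next
    case 2
    then have "xs \<noteq> []" using p by auto
    then obtain xs1 a where xs: "xs = xs1 @ [a]" using rev_exhaust by blast
    have a: "a \<noteq> Vac" using nx xs by auto
    have c': "c' = xs1 @ Vac # a # ys" using pq(6) c p 2 xs by (simp add: nth_append list_update_append)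
    have ph: "Phi2 xs ys \<le> Phi2 xs1 (a # ys) + 1"
      unfolding Phi2_def xs using invc_slide[of xs1 a ys] Lsplit_slide[OF a, of xs1 ys] by simp
    show ?thesis using c' ph nx ny a xs by (intro exI[of _ xs1] exI[of _ "a # ys"] conjI) simp_all
  next
    case 3
    then have "length ys \<ge> 2" using pq(2) c p by simp
    then obtain a b ys1 where ys: "ys = a # b # ys1"
      by (cases ys rule: remdups_adj.cases) auto
    have ab: "a \<noteq> Vac" "b \<noteq> Vac" using ny ys by auto
    have c': "c' = (xs @ [b, a]) @ Vac # ys1" using pq(6) c p 3 ys by (simp add: nth_append list_update_append)
    have "Lsplit (xs @ [b, a]) ys1 = Lsplit xs (a # b # ys1)" using Lsplit_jump[OF ab(2) ab(1) nx] .
    then have ph: "Phi2 xs ys \<le> Phi2 (xs @ [b, a]) ys1 + 1"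
      unfolding Phi2_def ys using invc_jump1[of xs a b ys1] by simp
    show ?thesis using c' ph nx ny ab ys by (intro exI[of _ "xs @ [b, a]"] exI[of _ ys1] conjI) simp_all
  next
    case 4
    then have "length xs \<ge> 2" using p by auto
    then have "length (rev xs) \<ge> 2" by simp
    then obtain b a rx where "rev xs = b # a # rx"
      by (cases "rev xs" rule: remdups_adj.cases) auto
    then have "rev (rev xs) = rev (b # a # rx)" by simp
    then have xs: "xs = rev rx @ [a, b]" by simp
    define xs1 where "xs1 = rev rx"
    have xs: "xs = xs1 @ [a, b]" using xs xs1_def by simp
    have ab: "a \<noteq> Vac" "b \<noteq> Vac" "Vac \<notin> set xs1" using nx xs by auto
    have c': "c' = xs1 @ Vac # b # a # ys" using pq(6) c p 4 xs by (simp add: nth_append list_update_append)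
    have "Lsplit (xs1 @ [a, b]) ys = Lsplit xs1 (b # a # ys)" using Lsplit_jump[OF ab] .
    then have ph: "Phi2 xs ys \<le> Phi2 xs1 (b # a # ys) + 1"
      unfolding Phi2_def xs using invc_jump2[of xs1 a b ys] by simp
    show ?thesis using c' ph nx ny ab xs by (intro exI[of _ xs1] exI[of _ "b # a # ys"] conjI) simp_all
  qed
qed

lemma phi_bound:
  "(legal_move ^^ k) c d \<Longrightarrow> c = xs @ Vac # ys \<Longrightarrow> Vac \<notin> set xs \<Longrightarrow> Vac \<notin> set ys
   \<Longrightarrow> d = xs' @ Vac # ys' \<Longrightarrow> Vac \<notin> set xs' \<Longrightarrow> Phi2 xs ys \<le> Phi2 xs' ys' + k"
proof (induction k arbitrary: c xs ys)
  case 0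
  then have "xs @ Vac # ys = xs' @ Vac # ys'" by simp
  then have "xs = xs' \<and> ys = ys'" using append_Cons_eq_iff[of Vac xs ys xs' ys'] 0 by blast
  then show ?case by simp
next
  case (Suc k)
  from relpowp_Suc_D2[OF Suc.prems(1)] obtain y where y: "legal_move c y" "(legal_move ^^ k) y d" by blast
  from move_phi[OF y(1) Suc.prems(2-4)] obtain xs1 ys1 where
    h: "y = xs1 @ Vac # ys1" "Vac \<notin> set xs1" "Vac \<notin> set ys1" "Phi2 xs ys \<le> Phi2 xs1 ys1 + 1" by blast
  have "Phi2 xs1 ys1 \<le> Phi2 xs' ys' + k" using Suc.IH[OF y(2) h(1-3) Suc.prems(5-6)] .
  then show ?case using h(4) by simp
qed

lemma invc_repB: "invc (replicate n Bl) = 0" by (induction n) (simp_all add: cntW_def)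
lemma invc_repW: "invc (replicate n Wh) = 0" by (induction n) simp_all
lemma cntB_rep: "cntB (replicate n Bl) = n" "cntB (replicate n Wh) = 0" by (induction n) simp_all
lemma cntW_rep: "cntW (replicate n Wh) = n" "cntW (replicate n Bl) = 0" by (induction n) simp_all

lemma phi_init: "1 \<le> n \<Longrightarrow> 1 \<le> m \<Longrightarrow> n * m + n + m \<le> Phi2 (replicate n Bl) (replicate m Wh)"
proof -
  assume a: "1 \<le> n" "1 \<le> m"
  have i: "invc (replicate n Bl @ Vac # replicate m Wh) = n * m"
    by (simp add: invc_app invc_repB invc_repW cntB_rep cntW_rep)
  have "0 + cntB (replicate n Bl) + cntW (replicate m Wh) \<le> smax (replicate n Bl) 0 (cntW (replicate m Wh)) (length (replicate n Bl))"
    using a by (intro smax_L2) (auto simp: cntW_rep)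
  then have "n + m \<le> Lsplit (replicate n Bl) (replicate m Wh)"
    unfolding Lsplit_def by (simp add: cntB_rep cntW_rep)
  then show ?thesis using i by (simp add: Phi2_def)
qed

lemma phi_final: "Phi2 (replicate m Wh) (replicate n Bl) = 0"
proof -
  have i: "invc (replicate m Wh @ Vac # replicate n Bl) = 0"
    by (simp add: invc_app invc_repB invc_repW cntB_rep cntW_rep)
  have "Lsplit (replicate m Wh) (replicate n Bl) = 0"
    unfolding Lsplit_def by (simp add: cntB_rep cntW_rep smax_noBl smax_noWh)
  then show ?thesis using i by (simp add: Phi2_def)
qed

lemma lower_bound:
  assumes "1 \<le> m" "m \<le> n" "(legal_move ^^ k) (init_conf n m) (final_conf n m)"
  shows "n * m + n + m \<le> k"
proof -
  have "Phi2 (replicate n Bl) (replicate m Wh) \<le> Phi2 (replicate m Wh) (replicate n Bl) + k"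
    using phi_bound[OF assms(3)] by (simp add: init_conf_def final_conf_def)
  then show ?thesis using phi_init[of n m] phi_final[of m n] assms by simp
qed


theorem theorem2:
  fixes n m :: nat and d :: dir
  assumes "1 \<le> m" and "m \<le> n"
  shows "(\<exists>tr. run (move n m d) (init_conf n m) = Some tr
            \<and> (\<forall>i. i + 1 < length tr \<longrightarrow> legal_move (tr ! i) (tr ! (i + 1)))
            \<and> last tr = final_conf n m)
         \<and> length (move n m d) = n * m + n + m
         \<and> (\<forall>k. (legal_move ^^ k) (init_conf n m) (final_conf n m) \<longrightarrow> n * m + n + m \<le> k)"
proof (intro conjI allI impI)
  show "\<exists>tr. run (move n m d) (init_conf n m) = Some tr
            \<and> (\<forall>i. i + 1 < length tr \<longrightarrow> legal_move (tr ! i) (tr ! (i + 1)))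
            \<and> last tr = final_conf n m"
    using move_steps[OF assms, of d] unfolding steps_def .
  show "length (move n m d) = n * m + n + m" using move_length[OF assms] .
  fix k assume "(legal_move ^^ k) (init_conf n m) (final_conf n m)"
  then show "n * m + n + m \<le> k" using lower_bound[OF assms] by blast
qed

end
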